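(* Let $B$ be a Batanin tree of dimension $d$ and $X$ a non-empty set of maximal positions of $B$. Then $\dim(\mathrm{fun}_X B)=d+1$ and $\partial_d(\mathrm{fun}_X B)=B$.
   Context: Batanin trees are generated inductively: for every finite list $B_1,\dots,B_n$ ($n\ge0$) of Batanin trees there is a tree $[B_1,\dots,B_n]$; $\dim[B_1,\dots,B_n]=\max_i(\dim B_i+1)$, with $\dim[\,]=0$. The suspension $\Sigma Y$ of a globular set has $0$-cells $v_-,v_+$ and $(\Sigma Y)_{n+1}=Y_n$. Positions: $\mathrm{Pos}([B_1,\dots,B_n])=\Sigma\mathrm{Pos}(B_1)\vee\cdots\vee\Sigma\mathrm{Pos}(B_n)$ (wedge sum gluing $v_+$ of each summand to $v_-$ of the next; a single point if $n=0$), with $\mathrm{inc}_i\colon\Sigma\mathrm{Pos}(B_i)\to\mathrm{Pos}(B)$ the summand inclusions. A position of $B$ is maximal if its dimension equals $\dim B$. Boundary: $\partial_0B=[\,]$, $\partial_{k+1}[B_1,\dots,B_n]=[\partial_kB_1,\dots,\partial_kB_n]$ (so $\partial_kB=B$ when $k\ge\dim B$). Functorialisation of a tree $B$ with respect to a set $X$ of maximal positions: $\mathrm{fun}_\emptyset B=B$; $\mathrm{fun}_X[\,]=[[\,]]$ for $X\neq\emptyset$; and for $X\neq\emptyset$, $\mathrm{fun}_X[B_1,\dots,B_n]=[\mathrm{fun}_{X_1}B_1,\dots,\mathrm{fun}_{X_n}B_n]$, where $X_i$ is the set of positions $p$ of $B_i$ with $\mathrm{inc}_i(\Sigma p)\in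 X$. *)

theory Defs
  imports Main
begin

datatype btree = Node "btree list"

fun tdim :: "btree \<Rightarrow> nat" where
  "tdim (Node Bs) = foldr max (map (\<lambda>b. Suc (tdim b)) Bs) 0"

fun bd :: "nat \<Rightarrow> btree \<Rightarrow> btree" where
  "bd 0 B = Node []"
| "bd (Suc k) (Node Bs) = Node (map (bd k) Bs)"

text \<open>Cells of the globular set Pos(B).  For B = [B1..Bn], Pos(B) is the wedge
  Sigma Pos(B1) v ... v Sigma Pos(Bn): its 0-cells are the n+1 vertices
  Vert 0, ..., Vert n (Vert (i-1) = v_- of the i-th summand = v_+ of the (i-1)-th),
  and its (k+1)-cells are Sub i p = inc_i(Sigma p) for p a k-cell of Pos(B_(i+1))
  (0-based index i).\<close>
datatype pos = Vert nat | Sub nat pos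

fun pdim :: "pos \<Rightarrow> nat" where
  "pdim (Vert j) = 0"
| "pdim (Sub i p) = Suc (pdim p)"

lemma size_zip_lt: "(i, b) \<in> set (zip xs Bs) \<Longrightarrow> size b < Suc (size_list size Bs)"
  by (meson less_Suc_eq_le set_zip_rightD size_list_estimation' order_refl)

function positions :: "btree \<Rightarrow> pos set" where
  "positions (Node Bs) =
     Vert ` {0..length Bs} \<union>
     (\<Union>(i, b) \<in> set (zip [0..<length Bs] Bs). Sub i ` positions b)"
  by pat_completeness auto
termination
  by (relation "measure size") (auto dest: size_zip_lt)

definition maxpos :: "btree \<Rightarrow> pos set" where
  "maxpos B = {p \<in> positions B. pdim p = tdim B}"

text \<open>Functorialisation fun_X B.  The sub-index set X_i is the set of positions p of
  B_i with inc_i(Sigma p) = Sub i p in X.\<close>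
function funct :: "pos set \<Rightarrow> btree \<Rightarrow> btree" where
  "funct X (Node Bs) =
     (if X = {} then Node Bs
      else if Bs = [] then Node [Node []]
      else Node (map (\<lambda>(i, b). funct {p \<in> positions b. Sub i p \<in> X} b)
                     (zip [0..<length Bs] Bs)))"
  by pat_completeness auto
termination
  by (relation "measure (\<lambda>(X, B). size B)") (auto dest: size_zip_lt)

end

theory Submission
  imports Defs
begin

lemma foldr_max_le: "(foldr max xs (0::nat) \<le> k) = (\<forall>x\<in>set xs. x \<le> k)"
  by (induction xs) auto

lemma foldr_max_ge: "x \<in> set xs \<Longrightarrow> x \<le> foldr max xs (0::nat)"
  by (induction xs) auto

lemma tdim_le: "(tdim (Node Bs) \<le> k) = (\<forall>b\<in>set Bs. Suc (tdim b) \<le> k)"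
  by (simp add: foldr_max_le)

lemma tdim_ge: "b \<in> set Bs \<Longrightarrow> Suc (tdim b) \<le> tdim (Node Bs)"
  by (simp add: foldr_max_ge)

lemma bd_id: "tdim B \<le> k \<Longrightarrow> bd k B = B"
proof (induction B arbitrary: k)
  case (Node Bs)
  show ?case
  proof (cases k)
    case 0
    then show ?thesis using Node.prems by (cases Bs) (auto simp: tdim_le)
  next
    case (Suc k')
    have "\<forall>b\<in>set Bs. Suc (tdim b) \<le> k" using Node.prems tdim_le[of Bs k] by blast
    then show ?thesis using Node.IH Suc by (auto intro!: map_idI)
  qed
qed

lemma pdim_le: "p \<in> positions B \<Longrightarrow> pdim p \<le> tdim B"
proof (induction B arbitrary: p)
  case (Node Bs)
  from Node.prems show ?case
  proof (auto simp del: tdim.simps)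
    fix i b q assume ib: "(i, b) \<in> set (zip [0..<length Bs] Bs)" and q: "q \<in> positions b"
    have b: "b \<in> set Bs" using ib by (meson set_zip_rightD)
    have "pdim q \<le> tdim b" using Node.IH[OF b q] .
    then show "Suc (pdim q) \<le> tdim (Node Bs)" using tdim_ge[OF b] by simp
  qed
qed

lemma main: "tdim B = d \<Longrightarrow> X \<subseteq> maxpos B \<Longrightarrow> X \<noteq> {} \<Longrightarrow>
   tdim (funct X B) = d + 1 \<and> bd d (funct X B) = B"
proof (induction B arbitrary: X d)
  case (Node Bs)
  show ?case
  proof (cases "Bs = []")
    case True
    then show ?thesis using Node.prems by auto
  next
    case False
    then obtain b0 where b0: "b0 \<in> set Bs" by (cases Bs) auto
    have "Suc (tdim b0) \<le> d" using tdim_ge[OF b0] Node.prems(1) by simp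
    then obtain d' where d: "d = Suc d'" by (cases d) auto
    define Xi where "Xi i = {p \<in> positions (Bs!i). Sub i p \<in> X}" for i
    define C where "C i = funct (Xi i) (Bs!i)" for i
    have fx: "funct X (Node Bs) = Node (map C [0..<length Bs])"
      using False Node.prems(3)
      by (auto simp: C_def Xi_def intro!: nth_equalityI)
    have funct_empty: "funct {} B = B" for B by (cases B) simp
    have tb: "tdim (Bs!i) \<le> d'" if "i < length Bs" for i
      using tdim_ge[of "Bs!i" Bs] that Node.prems(1) d by simp
    have nonempty: "tdim (C i) = d \<and> bd d' (C i) = Bs!i" if i: "i < length Bs" and ne: "Xi i \<noteq> {}" for i
    proof -
      obtain p where p: "p \<in> positions (Bs!i)" "Sub i p \<in> X" using ne unfolding Xi_def by auto
      have "pdim (Sub i p) = d" using p(2) Node.prems(1,2) unfolding maxpos_def by auto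
      hence pd: "pdim p = d'" using d by simp
      have td: "tdim (Bs!i) = d'" using pdim_le[OF p(1)] pd tb[OF i] by simp
      have sub: "Xi i \<subseteq> maxpos (Bs!i)"
      proof
        fix q assume q: "q \<in> Xi i"
        hence "q \<in> positions (Bs!i)" "Sub i q \<in> X" unfolding Xi_def by auto
        moreover have "pdim (Sub i q) = d" using \<open>Sub i q \<in> X\<close> Node.prems(1,2) unfolding maxpos_def by auto
        ultimately show "q \<in> maxpos (Bs!i)" using td d unfolding maxpos_def by simp
      qed
      have "Bs!i \<in> set Bs" using i by simp
      from Node.IH[OF this td sub ne] show ?thesis using d unfolding C_def by simp
    qed
    have empty: "C i = Bs!i" if "Xi i = {}" for i using that funct_empty unfolding C_def by simp
    obtain x where x: "x \<in> X" using Node.prems(3) by blast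
    hence xm: "x \<in> positions (Node Bs)" "pdim x = d" using Node.prems(1,2) unfolding maxpos_def by auto
    then obtain i p where ip: "x = Sub i p" "i < length Bs" "p \<in> positions (Bs!i)"
      using d by (auto simp: in_set_zip)
    have ine: "Xi i \<noteq> {}" using ip x unfolding Xi_def by auto
    have allC: "tdim (C j) \<le> d \<and> bd d' (C j) = Bs!j" if j: "j < length Bs" for j
    proof (cases "Xi j = {}")
      case True
      then show ?thesis using empty[OF True] tb[OF j] bd_id[OF tb[OF j]] d by simp
    next
      case False
      then show ?thesis using nonempty[OF j False] by simp
    qed
    have "tdim (Node (map C [0..<length Bs])) \<le> d + 1"
      unfolding tdim_le using allC by auto
    moreover have "Suc (tdim (C i)) \<le> tdim (Node (map C [0..<length Bs]))"
      by (rule tdim_ge) (use ip(2) in auto)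
    ultimately have "tdim (Node (map C [0..<length Bs])) = d + 1"
      using nonempty[OF ip(2) ine] by simp
    moreover have "bd d (Node (map C [0..<length Bs])) = Node Bs"
      using allC d by (auto intro!: nth_equalityI)
    ultimately show ?thesis using fx by simp
  qed
qed

theorem lemma4p6:
  fixes B :: btree and d :: nat and X :: "pos set"
  assumes "tdim B = d"
    and "X \<subseteq> maxpos B"
    and "X \<noteq> {}"
  shows "tdim (funct X B) = d + 1 \<and> bd d (funct X B) = B"
  using main[OF assms] .
end
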